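(* Let $x_1,\dots,x_N$ be elements of a unital C*-algebra satisfying $\sum_ix_ix_i^*=\sum_ix_i^*x_i=1$, and consider the following conditions: (1) $abc=cba$ for all $a,b,c\in\{x_i\}$; (2) $ab^*c=cb^*a$ for all $a,b,c\in\{x_i\}$; (3) $abc^*=c^*ba$ for all $a,b,c\in\{x_i\}$. Then $(1)\iff(3)$, and $(1)\Rightarrow(2)$. *)

theory Defs
  imports Complex_Main
begin

text \<open>Unital C*-algebras: a complete normed unital algebra over the complex numbers
  (given here as a real Banach algebra with a compatible complex scalar multiplication)
  with a conjugate-linear, anti-multiplicative involution satisfying the C*-identity.\<close>

class cstar_algebra = banach + real_normed_algebra_1 +
  fixes scaleC :: "complex \<Rightarrow> 'a \<Rightarrow> 'a"
    and cstar :: "'a \<Rightarrow> 'a"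
  assumes scaleC_of_real: "scaleC (complex_of_real r) x = scaleR r x"
    and scaleC_add_left: "scaleC (a + b) x = scaleC a x + scaleC b x"
    and scaleC_add_right: "scaleC a (x + y) = scaleC a x + scaleC a y"
    and scaleC_scaleC: "scaleC a (scaleC b x) = scaleC (a * b) x"
    and scaleC_one: "scaleC 1 x = x"
    and norm_scaleC: "norm (scaleC a x) = cmod a * norm x"
    and mult_scaleC_left: "scaleC a x * y = scaleC a (x * y)"
    and mult_scaleC_right: "x * scaleC a y = scaleC a (x * y)"
    and cstar_cstar: "cstar (cstar x) = x"
    and cstar_add: "cstar (x + y) = cstar x + cstar y"
    and cstar_scaleC: "cstar (scaleC a x) = scaleC (cnj a) (cstar x)"
    and cstar_mult: "cstar (x * y) = cstar y * cstar x"
    and cstar_identity: "norm (cstar x * x) = norm x ^ 2"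

end

theory Submission
  imports Defs
begin

declare [[show_sorts=false]]

lemma scaleC_zero_left [simp]: "scaleC 0 x = 0"
  using scaleC_of_real[of 0 x] by simp

lemma scaleC_zero_right [simp]: "scaleC a 0 = 0"
  using scaleC_add_right[of a 0 0] by simp

lemma scaleC_minus_left: "scaleC (- a) x = - scaleC a x"
  using scaleC_add_left[of a "-a" x] by (intro minus_unique[symmetric]) simp

lemma scaleC_minus_right: "scaleC a (- x) = - scaleC a x"
  using scaleC_add_right[of a x "-x"] by (intro minus_unique[symmetric]) simp

lemma scaleC_diff_right: "scaleC a (x - y) = scaleC a x - scaleC a y"
  using scaleC_add_right[of a x "-y"] by (simp add: scaleC_minus_right)

lemma scaleC_diff_left: "scaleC (a - b) x = scaleC a x - scaleC b x"
  using scaleC_add_left[of a "-b" x] by (simp add: scaleC_minus_left)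

lemma scaleC_real: "scaleC (complex_of_real r) x = scaleR r x"
  by (rule scaleC_of_real)

lemma scaleC_of_nat: "scaleC (of_nat m) x = of_nat m * x"
  using scaleC_of_real[of "real m" x] by (simp add: scaleR_conv_of_real)

lemma scaleC_mult_scaleC: "scaleC a x * scaleC b y = scaleC (a * b) (x * y)"
  by (simp add: mult_scaleC_left mult_scaleC_right scaleC_scaleC mult.commute)

lemma scaleC_power: "(scaleC a x) ^ n = scaleC (a ^ n) (x ^ n)"
  by (induction n) (simp_all add: scaleC_one scaleC_mult_scaleC)

lemma scaleC_sum_right: "scaleC a (sum f A) = (\<Sum>k\<in>A. scaleC a (f k))"
  by (induction A rule: infinite_finite_induct) (simp_all add: scaleC_add_right)

lemma scaleC_sum_left: "scaleC (sum f A) x = (\<Sum>k\<in>A. scaleC (f k) x)"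
  by (induction A rule: infinite_finite_induct) (simp_all add: scaleC_add_left)

lemma cstar_zero [simp]: "cstar 0 = 0"
  using cstar_add[of 0 0] by simp

lemma cstar_minus: "cstar (- x) = - cstar x"
  using cstar_add[of x "-x"] by (intro minus_unique[symmetric]) simp

lemma cstar_diff: "cstar (x - y) = cstar x - cstar y"
  using cstar_add[of x "-y"] by (simp add: cstar_minus)

lemma cstar_one [simp]: "cstar 1 = 1"
proof -
  have "cstar (cstar 1 * 1) = cstar 1 * cstar (cstar 1)" by (rule cstar_mult)
  then show ?thesis by (simp add: cstar_cstar)
qed

lemma cstar_scaleR: "cstar (scaleR r x) = scaleR r (cstar x)"
  using cstar_scaleC[of "complex_of_real r" x] by (simp add: scaleC_of_real)

lemma cstar_sum: "cstar (sum f A) = (\<Sum>k\<in>A. cstar (f k))"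
  by (induction A rule: infinite_finite_induct) (simp_all add: cstar_add)

lemma norm_cstar_le: "norm x \<le> norm (cstar x)"
proof (cases "x = 0")
  case False
  have "norm x ^ 2 = norm (cstar x * x)" by (simp add: cstar_identity)
  also have "\<dots> \<le> norm (cstar x) * norm x" by (rule norm_mult_ineq)
  finally have "norm x * norm x \<le> norm (cstar x) * norm x" by (simp add: power2_eq_square)
  with False show ?thesis by simp
qed simp

lemma norm_cstar [simp]: "norm (cstar x) = norm x"
  using norm_cstar_le[of x] norm_cstar_le[of "cstar x"] by (simp add: cstar_cstar)


lemma neumann:
  fixes x :: "'a::{real_normed_algebra_1,banach}"
  assumes "norm x < 1"
  shows "\<exists>r. r * (1 - x) = 1 \<and> (1 - x) * r = 1"
proof -
  have sm: "summable (\<lambda>n. x ^ n)"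
    by (rule summable_comparison_test[of _ "\<lambda>n. norm x ^ n"])
       (use assms norm_power_ineq in \<open>auto intro: summable_geometric\<close>)
  have lim: "(\<lambda>n. x ^ n) \<longlonglongrightarrow> 0" using assms by (rule LIMSEQ_power_zero)
  have tel: "(\<lambda>n. x ^ n - x ^ Suc n) sums (x ^ 0 - 0)"
    by (rule telescope_sums'[OF lim])
  have "(1 - x) * suminf (\<lambda>n. x ^ n) = suminf (\<lambda>n. (1 - x) * x ^ n)"
    using suminf_mult[OF sm] by simp
  also have "\<dots> = suminf (\<lambda>n. x ^ n - x ^ Suc n)"
    by (simp add: algebra_simps)
  also have "\<dots> = 1" using sums_unique[OF tel] by simp
  finally have 1: "(1 - x) * suminf (\<lambda>n. x ^ n) = 1" .
  have "suminf (\<lambda>n. x ^ n) * (1 - x) = suminf (\<lambda>n. x ^ n * (1 - x))"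
    using suminf_mult2[OF sm] by simp
  also have "\<dots> = suminf (\<lambda>n. x ^ n - x ^ Suc n)"
    by (simp add: algebra_simps power_Suc2 power_commutes)
  also have "\<dots> = 1" using sums_unique[OF tel] by simp
  finally show ?thesis using 1 by blast
qed

lemma binomial_one_plus:
  fixes y :: "'a::ring_1"
  shows "(1 + y) ^ n = (\<Sum>k\<le>n. of_nat (n choose k) * y ^ k)"
proof (induction n)
  case 0 then show ?case by simp
next
  case (Suc n)
  have "(1 + y) ^ Suc n = (1 + y) * (\<Sum>k\<le>n. of_nat (n choose k) * y ^ k)"
    using Suc by simp
  also have "\<dots> = (\<Sum>k\<le>n. of_nat (n choose k) * y ^ k) + (\<Sum>k\<le>n. of_nat (n choose k) * y ^ Suc k)"
  proof -
    have "y * (\<Sum>k\<le>n. of_nat (n choose k) * y ^ k) = (\<Sum>k\<le>n. of_nat (n choose k) * y ^ Suc k)"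
      unfolding sum_distrib_left by (rule sum.cong) (simp_all, metis mult.assoc mult_of_nat_commute)
    then show ?thesis by (simp add: distrib_right)
  qed
  also have "\<dots> = (\<Sum>k\<le>Suc n. of_nat (Suc n choose k) * y ^ k)"
  proof -
    have a: "(\<Sum>k\<le>Suc n. of_nat (Suc n choose k) * y ^ k) = 1 + (\<Sum>k\<le>n. of_nat (Suc n choose Suc k) * y ^ Suc k)"
      by (subst sum.atMost_Suc_shift) simp
    have b: "(\<Sum>k\<le>n. of_nat (n choose k) * y ^ k) = 1 + (\<Sum>k<n. of_nat (n choose Suc k) * y ^ Suc k)"
      by (subst lessThan_Suc_atMost[symmetric], subst sum.lessThan_Suc_shift) simp
    have c: "(\<Sum>k\<le>n. of_nat (n choose Suc k) * y ^ Suc k) = (\<Sum>k<n. of_nat (n choose Suc k) * (y ^ Suc k :: 'a))"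
      by (simp add: lessThan_Suc_atMost[symmetric] binomial_eq_0)
    show ?thesis unfolding a b using c by (simp add: sum.distrib algebra_simps)
  qed
  finally show ?case .
qed

definition psd :: "'a::cstar_algebra \<Rightarrow> bool" where
  "psd a \<longleftrightarrow> (\<exists>K \<delta>. 0 < \<delta> \<and> (\<forall>\<epsilon>. 0 < \<epsilon> \<longrightarrow> \<epsilon> < \<delta> \<longrightarrow> norm (1 - scaleR \<epsilon> a) \<le> 1 + K * \<epsilon>^2))"

lemma psd_zero: "psd (0::'a::cstar_algebra)"
  unfolding psd_def by (rule exI[of _ 0], rule exI[of _ 1]) simp

lemma psd_add:
  fixes a b :: "'a::cstar_algebra"
  assumes "psd a" "psd b" shows "psd (a + b)"
proof -
  obtain K1 d1 where d1: "0 < d1" and h1: "\<And>e. 0 < e \<Longrightarrow> e < d1 \<Longrightarrow> norm (1 - scaleR e a) \<le> 1 + K1 * e^2"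
    using assms(1) unfolding psd_def by blast
  obtain K2 d2 where d2: "0 < d2" and h2: "\<And>e. 0 < e \<Longrightarrow> e < d2 \<Longrightarrow> norm (1 - scaleR e b) \<le> 1 + K2 * e^2"
    using assms(2) unfolding psd_def by blast
  show ?thesis unfolding psd_def
  proof (intro exI conjI allI impI)
    show "0 < min d1 d2 / 2" using d1 d2 by simp
    fix e :: real assume e: "0 < e" "e < min d1 d2 / 2"
    have hh: "scaleR (1/2) 1 + scaleR (1/2) (1::'a) = 1"
      by (simp flip: scaleR_add_left)
    have "scaleR (1/2) (1 - scaleR (2*e) a) + scaleR (1/2) (1 - scaleR (2*e) b) = (scaleR (1/2) 1 + scaleR (1/2) 1) - scaleR e (a + b)"
      by (simp add: scaleR_diff_right scaleR_add_right)
    then have "1 - scaleR e (a + b) = scaleR (1/2) (1 - scaleR (2*e) a) + scaleR (1/2) (1 - scaleR (2*e) b)"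
      using hh by simp
    then have "norm (1 - scaleR e (a + b)) \<le> (1/2) * norm (1 - scaleR (2*e) a) + (1/2) * norm (1 - scaleR (2*e) b)"
      by (metis norm_triangle_ineq norm_scaleR abs_of_pos divide_pos_pos zero_less_one zero_less_numeral)
    also have "\<dots> \<le> (1/2) * (1 + K1 * (2*e)^2) + (1/2) * (1 + K2 * (2*e)^2)"
      using h1[of "2*e"] h2[of "2*e"] e by (intro add_mono) auto
    also have "\<dots> = 1 + (2 * (K1 + K2)) * e^2" by (simp add: algebra_simps power2_eq_square)
    finally show "norm (1 - scaleR e (a + b)) \<le> 1 + (2 * (K1 + K2)) * e^2" .
  qed
qed

lemma psd_sum:
  fixes f :: "'i \<Rightarrow> 'a::cstar_algebra"
  assumes "finite F" "\<And>k. k \<in> F \<Longrightarrow> psd (f k)"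
  shows "psd (sum f F)"
  using assms by (induction F rule: finite_induct) (auto intro: psd_zero psd_add)

lemma square_bound:
  fixes h :: "'a::cstar_algebra"
  assumes sa: "cstar h = h" and e: "0 < e" "e * (norm h)^2 < 1"
  shows "norm (1 - scaleR e (h * h)) \<le> 1 + e^2 * norm h ^ 4"
proof -
  define t where "t = sqrt e"
  have t0: "0 \<le> t" and tt: "t * t = e" using e by (auto simp: t_def)
  define x where "x = scaleC (\<i> * complex_of_real t) h"
  have nx: "norm x = t * norm h" unfolding x_def
    by (simp add: norm_scaleC norm_mult t0)
  have "(t * norm h)^2 = (t * t) * norm h ^ 2" by (simp add: power_mult_distrib power2_eq_square)
  then have "(t * norm h)^2 < 1" using e tt by simp
  then have "\<bar>t * norm h\<bar> < 1" by (simp add: abs_square_less_1)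
  then have nx1: "norm x < 1" using nx by simp
  obtain r where r1: "r * (1 - x) = 1" and r2: "(1 - x) * r = 1"
    using neumann[OF nx1] by blast
  define s where "s = cstar r"
  have cx: "cstar x = - x" unfolding x_def
    by (simp add: cstar_scaleC sa scaleC_minus_left)
  have s1: "(1 + x) * s = 1"
    using arg_cong[OF r1, of cstar] by (simp add: cstar_mult cstar_diff cx s_def)
  have s2: "s * (1 + x) = 1"
    using arg_cong[OF r2, of cstar] by (simp add: cstar_mult cstar_diff cx s_def)
  have xx: "x * x = - scaleR e (h * h)"
  proof -
    have "x * x = scaleC ((\<i> * complex_of_real t) * (\<i> * complex_of_real t)) (h * h)"
      unfolding x_def by (rule scaleC_mult_scaleC)
    also have "(\<i> * complex_of_real t) * (\<i> * complex_of_real t) = complex_of_real (- e)"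
      using tt by (simp add: algebra_simps flip: of_real_mult)
    finally show ?thesis by (simp add: scaleC_minus_left scaleC_real)
  qed
  define p where "p = 1 + scaleR e (h * h)"
  have p1: "(1 - x) * (1 + x) = p" unfolding p_def using xx by (simp add: algebra_simps)
  have p2: "(1 + x) * (1 - x) = p" unfolding p_def using xx by (simp add: algebra_simps)
  define q where "q = s * r"
  have qp: "q * p = 1"
  proof -
    have "q * p = s * ((r * (1 - x)) * (1 + x))" unfolding q_def p1[symmetric] by (simp add: mult.assoc)
    then show ?thesis using r1 s2 by simp
  qed
  have pq: "p * q = 1"
  proof -
    have "p * q = (1 - x) * ((1 + x) * s) * r" unfolding q_def p1[symmetric] by (simp add: mult.assoc)
    then show ?thesis using s1 r2 by simp
  qed
  have rp: "r * p = 1 + x"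
  proof -
    have "r * p = (r * (1 - x)) * (1 + x)" unfolding p1[symmetric] by (simp add: mult.assoc)
    then show ?thesis using r1 by simp
  qed
  have sp: "s * p = 1 - x"
  proof -
    have "s * p = (s * (1 + x)) * (1 - x)" unfolding p2[symmetric] by (simp add: mult.assoc)
    then show ?thesis using s2 by simp
  qed
  have rs: "r + s = q + q"
  proof -
    have "r + s = (r + s) * (p * q)" using pq by simp
    also have "\<dots> = (r * p + s * p) * q" by (simp add: algebra_simps)
    also have "\<dots> = q + q" using rp sp by (simp add: algebra_simps mult_2)
    finally show ?thesis .
  qed
  define U where "U = r + r - 1"
  have cU: "cstar U = s + s - 1" unfolding U_def s_def by (simp add: cstar_add cstar_diff)
  have "cstar U * U = (s + s - 1) * (r + r - 1)" using cU by (simp add: U_def)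
  also have "\<dots> = (s * r + s * r + s * r + s * r) - (r + s) - (r + s) + 1"
    by (simp add: algebra_simps)
  also have "\<dots> = 1" unfolding rs q_def by simp
  finally have UU: "cstar U * U = 1" .
  have "norm U ^ 2 = 1" using cstar_identity[of U] UU by simp
  then have nU: "norm U = 1" using norm_ge_zero[of U] by (simp add: power2_eq_1_iff)
  have "r = scaleR (1/2) (U + 1)" unfolding U_def by (simp add: scaleR_add_right[symmetric])
  then have "norm r \<le> (1/2) * (norm U + norm (1::'a))"
    using norm_triangle_ineq[of U 1] by simp
  then have nr: "norm r \<le> 1" using nU by simp
  have nq: "norm q \<le> 1"
  proof -
    have "norm q \<le> norm s * norm r" unfolding q_def by (rule norm_mult_ineq)
    also have "\<dots> \<le> 1 * 1" using nr unfolding s_def by (intro mult_mono) auto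
    finally show ?thesis by simp
  qed
  have eq: "1 - scaleR e (h * h) = q * (1 - scaleR e (h * h) * scaleR e (h * h))"
  proof -
    have "1 - scaleR e (h * h) = (q * p) * (1 - scaleR e (h * h))" using qp by simp
    also have "\<dots> = q * (p * (1 - scaleR e (h * h)))" by (simp add: mult.assoc)
    also have "p * (1 - scaleR e (h * h)) = 1 - scaleR e (h * h) * scaleR e (h * h)"
      unfolding p_def by (simp add: algebra_simps)
    finally show ?thesis .
  qed
  have nhh: "norm (scaleR e (h * h)) \<le> e * norm h ^ 2"
    using e norm_mult_ineq[of h h] by (simp add: power2_eq_square mult_left_mono)
  have "norm (scaleR e (h * h) * scaleR e (h * h)) \<le> (e * norm h ^ 2) * (e * norm h ^ 2)"
    by (rule order_trans[OF norm_mult_ineq mult_mono[OF nhh nhh]]) (use e in auto)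
  also have "\<dots> = e^2 * norm h ^ 4" by (simp add: power2_eq_square power4_eq_xxxx)
  finally have n4: "norm (scaleR e (h * h) * scaleR e (h * h)) \<le> e^2 * norm h ^ 4" .
  have "norm (1 - scaleR e (h * h)) \<le> norm q * norm (1 - scaleR e (h * h) * scaleR e (h * h))"
    unfolding eq by (rule norm_mult_ineq)
  also have "\<dots> \<le> 1 * (1 + e^2 * norm h ^ 4)"
    using nq n4 norm_triangle_ineq4[of "1::'a" "scaleR e (h * h) * scaleR e (h * h)"]
    by (intro mult_mono) auto
  finally show ?thesis by simp
qed

lemma psd_square:
  fixes h :: "'a::cstar_algebra"
  assumes "cstar h = h" shows "psd (h * h)"
  unfolding psd_def
proof (intro exI conjI allI impI)
  have "0 < norm h ^ 2 + 1" by (metis add_nonneg_pos zero_le_power2 zero_less_one)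
  then show "0 < 1 / (norm h ^ 2 + 1)" by simp
  fix e :: real assume e: "0 < e" "e < 1 / (norm h ^ 2 + 1)"
  have "e * (norm h ^ 2 + 1) < 1" using e by (simp add: field_simps add_pos_nonneg)
  then have "e * norm h ^ 2 < 1" using e by (simp add: algebra_simps)
  then show "norm (1 - scaleR e (h * h)) \<le> 1 + norm h ^ 4 * e^2"
    using square_bound[OF assms e(1)] by (simp add: mult.commute)
qed

lemma binomial_scaleC:
  fixes A :: "'a::cstar_algebra"
  shows "(1 + scaleC z A) ^ n = (\<Sum>k\<le>n. scaleC (of_nat (n choose k) * z ^ k) (A ^ k))"
  unfolding binomial_one_plus
  by (rule sum.cong) (simp_all add: scaleC_power scaleC_of_nat[symmetric] scaleC_scaleC)

lemma root_filter_aux: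
  fixes k :: nat
  shows "1 + (- \<i>) * \<i> ^ (k + 4) - (-1) ^ (k + 4) + \<i> * (- \<i>) ^ (k + 4) = 1 + (- \<i>) * \<i> ^ k - (-1) ^ k + \<i> * (- \<i>) ^ k"
proof -
  have a: "\<i> ^ (k + 4) = \<i> ^ k" by (simp only: power_add) (simp add: power4_eq_xxxx)
  have b: "(- \<i>) ^ (k + 4) = (- \<i>) ^ k" by (simp only: power_add) (simp add: power4_eq_xxxx)
  have c: "(-1::complex) ^ (k + 4) = (-1) ^ k" by (simp only: power_add) (simp add: power4_eq_xxxx)
  show ?thesis by (simp only: a b c)
qed

lemma root_filter:
  "1 + (- \<i>) * \<i> ^ k - (-1) ^ k + \<i> * (- \<i>) ^ k = (if k mod 4 = 1 then 4 else (0::complex))"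
proof (induction k rule: less_induct)
  case (less k)
  show ?case
  proof (cases "k < 4")
    case True
    then have "k = 0 \<or> k = 1 \<or> k = 2 \<or> k = 3" by auto
    then show ?thesis
    proof (elim disjE)
      assume "k = 0" then show ?thesis by simp
    next
      assume "k = 1" then show ?thesis by simp
    next
      assume "k = 2" then show ?thesis by (simp add: power2_eq_square)
    next
      assume "k = 3" then show ?thesis by (simp add: power3_eq_cube)
    qed
  next
    case False
    then obtain m where m: "k = m + 4" by (metis add.commute le_Suc_ex not_less)
    have "m < k" using m by simp
    then have ih: "1 + (- \<i>) * \<i> ^ m - (-1) ^ m + \<i> * (- \<i>) ^ m = (if m mod 4 = 1 then 4 else (0::complex))"
      by (rule less.IH)
    have "k mod 4 = m mod 4" using m by simp
    then show ?thesis using ih root_filter_aux[of m] m by simp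
  qed
qed

lemma imag_bound:
  fixes A :: "'a::cstar_algebra"
  assumes sa: "cstar A = A"
  shows "norm (1 + scaleC (\<i> * complex_of_real t) A) \<le> 1 + t^2 * norm A ^ 2"
proof -
  define y where "y = scaleC (\<i> * complex_of_real t) A"
  have cy: "cstar y = - y" unfolding y_def by (simp add: cstar_scaleC sa scaleC_minus_left)
  have yy: "y * y = - scaleR (t^2) (A * A)"
  proof -
    have "y * y = scaleC ((\<i> * complex_of_real t) * (\<i> * complex_of_real t)) (A * A)"
      unfolding y_def by (rule scaleC_mult_scaleC)
    also have "(\<i> * complex_of_real t) * (\<i> * complex_of_real t) = - complex_of_real (t^2)"
      by (simp add: algebra_simps power2_eq_square)
    finally show ?thesis by (simp add: scaleC_minus_left scaleC_real[of "t^2", simplified])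
  qed
  have "cstar (1 + y) * (1 + y) = 1 + scaleR (t^2) (A * A)"
    using cy yy by (simp add: cstar_add algebra_simps)
  then have "norm (1 + y) ^ 2 = norm (1 + scaleR (t^2) (A * A))"
    using cstar_identity[of "1 + y"] by simp
  also have "\<dots> \<le> 1 + t^2 * norm A ^ 2"
  proof -
    have "norm (scaleR (t^2) (A * A)) = t^2 * norm (A * A)" by simp
    also have "\<dots> \<le> t^2 * norm A ^ 2" by (intro mult_left_mono) (simp_all add: power2_eq_square norm_mult_ineq)
    finally show ?thesis using norm_triangle_ineq[of 1 "scaleR (t^2) (A * A)"] by simp
  qed
  finally have le: "norm (1 + y) ^ 2 \<le> 1 + t^2 * norm A ^ 2" .
  have u0: "0 \<le> t^2 * norm A ^ 2" by simp
  have "1 + t^2 * norm A ^ 2 \<le> (1 + t^2 * norm A ^ 2) ^ 2"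
  proof -
    have "0 \<le> (t^2 * norm A ^ 2) * (1 + t^2 * norm A ^ 2)" using u0 by simp
    then show ?thesis by (simp add: power2_eq_square algebra_simps)
  qed
  then show ?thesis unfolding y_def[symmetric]
    using le by (smt (verit) norm_ge_zero power2_le_imp_le zero_le_power2 mult_nonneg_nonneg)
qed

lemma tail_bound_aux:
  "(\<Sum>k\<le>n. if 5 \<le> k then 2^k / fact k else 0) + (if 5 \<le> n then 2 * (2^Suc n / fact (Suc n)) else 0) \<le> (8/15::real)"
proof (induction n)
  case 0 then show ?case by simp
next
  case (Suc n)
  show ?case
  proof (cases "5 \<le> n")
    case True
    have b: "(2::real)^Suc (Suc n) / fact (Suc (Suc n)) = (2^Suc n / fact (Suc n)) * (2 / (Suc (Suc n)))"
      by (simp add: field_simps)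
    have "2 / real (Suc (Suc n)) \<le> 1/2" using True by (simp add: field_simps)
    then have "(2^Suc n / fact (Suc n)) * (2 / real (Suc (Suc n))) \<le> (2^Suc n / fact (Suc n)) * (1/2::real)"
      by (intro mult_left_mono) auto
    then have "2 * ((2::real)^Suc (Suc n) / fact (Suc (Suc n))) \<le> 2^Suc n / fact (Suc n)"
      unfolding b by simp
    then show ?thesis using Suc True by simp
  next
    case False
    have z: "(\<Sum>k\<le>n. if 5 \<le> k then (2::real)^k / fact k else 0) = 0"
      using False by (intro sum.neutral) auto
    show ?thesis
    proof (cases "n = 4")
      case True
      have f5: "fact 5 = (120::real)" by (simp add: fact_numeral)
      have f6: "fact 6 = (720::real)" by (simp add: fact_numeral)
      show ?thesis using z True by (simp add: f5 f6)
    next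
      case False
      then show ?thesis using z \<open>\<not> 5 \<le> n\<close> by simp
    qed
  qed
qed

lemma tail_bound: "(\<Sum>k\<le>n. if 5 \<le> k then 2^k / fact k else 0) \<le> (8/15::real)"
  using tail_bound_aux[of n] by (smt (verit) zero_le_divide_iff zero_le_power fact_ge_zero)

lemma choose_bound:
  assumes "0 < n"
  shows "real (n choose k) * (2 / real n) ^ k \<le> 2 ^ k / fact k"
proof -
  have "real ((n choose k) * fact k) \<le> real (n ^ k)" by (simp only: of_nat_le_iff binomial_fact_pow)
  then have "real (n choose k) * fact k \<le> real n ^ k" by simp
  then have "real (n choose k) \<le> real n ^ k / fact k" by (simp add: field_simps)
  then have "real (n choose k) * (2 / real n) ^ k \<le> (real n ^ k / fact k) * (2 / real n) ^ k"
    by (intro mult_right_mono) auto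
  also have "\<dots> = 2 ^ k / fact k" using assms by (simp add: power_divide field_simps)
  finally show ?thesis .
qed

lemma pow_bound:
  fixes y :: "'a::cstar_algebra"
  assumes "norm y \<le> 1 + u" "0 \<le> u" "real n * u \<le> 1/8"
  shows "norm (y ^ n) \<le> 5/4"
proof -
  have "norm (y ^ n) \<le> norm y ^ n" by (rule norm_power_ineq)
  also have "\<dots> \<le> (1 + u) ^ n" by (intro power_mono assms) simp
  also have "\<dots> \<le> exp u ^ n" by (intro power_mono) (use assms in auto)
  also have "\<dots> = exp (real n * u)" by (simp add: exp_of_nat_mult)
  also have "\<dots> \<le> 1 + 2 * (real n * u)"
    by (rule real_exp_bound_lemma) (use assms in auto)
  also have "\<dots> \<le> 5/4" using assms by simp
  finally show ?thesis .
qed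

lemma coeff_identity:
  fixes A :: "'a::cstar_algebra" and c :: complex and w :: real
  shows "scaleC (c * complex_of_real w ^ k) B + scaleC (- \<i>) (scaleC (c * (\<i> * complex_of_real w) ^ k) B)
       - scaleC (c * (- complex_of_real w) ^ k) B + scaleC \<i> (scaleC (c * (- (\<i> * complex_of_real w)) ^ k) B)
       = scaleC (c * complex_of_real w ^ k * (1 + (- \<i>) * \<i> ^ k - (-1) ^ k + \<i> * (- \<i>) ^ k)) B"
proof -
  have "scaleC (c * complex_of_real w ^ k) B + scaleC (- \<i>) (scaleC (c * (\<i> * complex_of_real w) ^ k) B)
       - scaleC (c * (- complex_of_real w) ^ k) B + scaleC \<i> (scaleC (c * (- (\<i> * complex_of_real w)) ^ k) B)
     = scaleC (c * complex_of_real w ^ k + (- \<i>) * (c * (\<i> * complex_of_real w) ^ k)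
         - c * (- complex_of_real w) ^ k + \<i> * (c * (- (\<i> * complex_of_real w)) ^ k)) B"
    by (simp add: scaleC_scaleC scaleC_add_left scaleC_diff_left scaleC_minus_left)
  also have "c * complex_of_real w ^ k + (- \<i>) * (c * (\<i> * complex_of_real w) ^ k)
         - c * (- complex_of_real w) ^ k + \<i> * (c * (- (\<i> * complex_of_real w)) ^ k)
       = c * complex_of_real w ^ k * (1 + (- \<i>) * \<i> ^ k - (-1) ^ k + \<i> * (- \<i>) ^ k)"
  proof -
    have e1: "(\<i> * complex_of_real w) ^ k = \<i> ^ k * complex_of_real w ^ k" by (simp add: power_mult_distrib)
    have e2: "(- complex_of_real w) ^ k = (-1) ^ k * complex_of_real w ^ k"
      by (metis mult_minus1 power_mult_distrib)
    have e3: "(- (\<i> * complex_of_real w)) ^ k = (- \<i>) ^ k * complex_of_real w ^ k"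
      by (metis minus_mult_left power_mult_distrib)
    show ?thesis unfolding e1 e2 e3 by (simp add: algebra_simps)
  qed
  finally show ?thesis .
qed

lemma psd_antisym:
  fixes A :: "'a::cstar_algebra"
  assumes sa: "cstar A = A" and pA: "psd A" and pmA: "psd (- A)"
  shows "A = 0"
proof (rule ccontr)
  assume "A \<noteq> 0"
  define \<alpha> where "\<alpha> = norm A"
  have a0: "0 < \<alpha>" using \<open>A \<noteq> 0\<close> by (simp add: \<alpha>_def)
  obtain K1 d1 where d1: "0 < d1" and h1: "\<And>e. 0 < e \<Longrightarrow> e < d1 \<Longrightarrow> norm (1 - scaleR e A) \<le> 1 + K1 * e^2"
    using pA unfolding psd_def by blast
  obtain K2 d2 where d2: "0 < d2" and h2: "\<And>e. 0 < e \<Longrightarrow> e < d2 \<Longrightarrow> norm (1 - scaleR e (- A)) \<le> 1 + K2 * e^2"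
    using pmA unfolding psd_def by blast
  define L where "L = max (max K1 K2) (\<alpha>^2)"
  have L1: "K1 \<le> L" "K2 \<le> L" "\<alpha>^2 \<le> L" by (auto simp: L_def)
  have L0: "0 < L" using L1(3) a0 by (smt (verit) zero_less_power)
  define \<delta> where "\<delta> = min d1 d2"
  have \<delta>0: "0 < \<delta>" using d1 d2 by (simp add: \<delta>_def)
  obtain n :: nat where n: "real n > 2 / (\<alpha> * \<delta>) + 32 * L / \<alpha>^2 + 1"
    using reals_Archimedean2 by blast
  have pos1: "0 \<le> 2 / (\<alpha> * \<delta>)" "0 \<le> 32 * L / \<alpha>^2" using a0 \<delta>0 L0 by auto
  have n0: "0 < real n" using n pos1 by linarith
  define w where "w = 2 / (\<alpha> * real n)"
  have w0: "0 < w" using a0 n0 by (simp add: w_def)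
  have "2 / (\<alpha> * \<delta>) < real n" using n pos1 by linarith
  then have "2 < real n * (\<alpha> * \<delta>)" using a0 \<delta>0 by (simp add: field_simps)
  then have "w < \<delta>" using a0 n0 by (simp add: w_def field_simps)
  then have wd: "w < d1" "w < d2" by (auto simp: \<delta>_def)
  have "32 * L / \<alpha>^2 < real n" using n pos1 by linarith
  then have "32 * L < real n * \<alpha>^2" using a0 by (simp add: field_simps)
  have nLw: "real n * (L * w^2) = 4 * L / (real n * \<alpha>^2)"
    using a0 n0 by (simp add: w_def field_simps power2_eq_square)
  have nLw2: "real n * (L * w^2) \<le> 1/8"
    unfolding nLw using \<open>32 * L < real n * \<alpha>^2\<close> a0 n0 by (simp add: field_simps)
  have u0: "0 \<le> L * w^2" using L0 by simp
  define z0 where "z0 = complex_of_real w"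
  define z1 where "z1 = \<i> * complex_of_real w"
  define z2 where "z2 = - complex_of_real w"
  define z3 where "z3 = - (\<i> * complex_of_real w)"
  have b0: "norm (1 + scaleC z0 A) \<le> 1 + L * w^2"
  proof -
    have "1 + scaleC z0 A = 1 - scaleR w (- A)" by (simp add: z0_def scaleC_real)
    then show ?thesis using h2[OF w0 wd(2)] L1 by (smt (verit) mult_right_mono zero_le_power2)
  qed
  have b2: "norm (1 + scaleC z2 A) \<le> 1 + L * w^2"
  proof -
    have "1 + scaleC z2 A = 1 - scaleR w A" by (simp add: z2_def scaleC_real scaleC_minus_left)
    then show ?thesis using h1[OF w0 wd(1)] L1 by (smt (verit) mult_right_mono zero_le_power2)
  qed
  have b1: "norm (1 + scaleC z1 A) \<le> 1 + L * w^2"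
    using imag_bound[OF sa, of w] L1 unfolding z1_def \<alpha>_def[symmetric]
    by (smt (verit) mult_left_mono zero_le_power2 mult.commute)
  have b3: "norm (1 + scaleC z3 A) \<le> 1 + L * w^2"
  proof -
    have "z3 = \<i> * complex_of_real (- w)" by (simp add: z3_def)
    then show ?thesis
      using imag_bound[OF sa, of "-w"] L1 unfolding \<alpha>_def[symmetric]
      by (smt (verit) mult_left_mono zero_le_power2 mult.commute power2_minus)
  qed
  define P where "P z = (1 + scaleC z A) ^ n" for z
  have pb0: "norm (P z0) \<le> 5/4" unfolding P_def by (rule pow_bound[OF b0 u0 nLw2])
  have pb1: "norm (P z1) \<le> 5/4" unfolding P_def by (rule pow_bound[OF b1 u0 nLw2])
  have pb2: "norm (P z2) \<le> 5/4" unfolding P_def by (rule pow_bound[OF b2 u0 nLw2])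
  have pb3: "norm (P z3) \<le> 5/4" unfolding P_def by (rule pow_bound[OF b3 u0 nLw2])
  define S where "S = P z0 + scaleC (- \<i>) (P z1) - P z2 + scaleC \<i> (P z3)"
  have Sup: "norm S \<le> 5"
  proof -
    have "norm S \<le> norm (P z0) + norm (scaleC (- \<i>) (P z1)) + norm (P z2) + norm (scaleC \<i> (P z3))"
      unfolding S_def by (smt (verit) norm_triangle_ineq norm_triangle_ineq4)
    also have "\<dots> = norm (P z0) + norm (P z1) + norm (P z2) + norm (P z3)"
      by (simp add: norm_scaleC)
    also have "\<dots> \<le> 5" using pb0 pb1 pb2 pb3 by simp
    finally show ?thesis .
  qed
  define g where "g k = (if k mod 4 = 1 then scaleR (4 * real (n choose k) * w ^ k) (A ^ k) else 0)" for k
  have Sg: "S = (\<Sum>k\<le>n. g k)"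
  proof -
    have "S = (\<Sum>k\<le>n. scaleC (of_nat (n choose k) * z0 ^ k) (A ^ k)
        + scaleC (- \<i>) (scaleC (of_nat (n choose k) * z1 ^ k) (A ^ k))
        - scaleC (of_nat (n choose k) * z2 ^ k) (A ^ k)
        + scaleC \<i> (scaleC (of_nat (n choose k) * z3 ^ k) (A ^ k)))"
      unfolding S_def P_def binomial_scaleC
      by (simp add: sum.distrib sum_subtractf scaleC_sum_right)
    also have "\<dots> = (\<Sum>k\<le>n. g k)"
    proof (rule sum.cong[OF refl])
      fix k
      show "scaleC (of_nat (n choose k) * z0 ^ k) (A ^ k)
        + scaleC (- \<i>) (scaleC (of_nat (n choose k) * z1 ^ k) (A ^ k))
        - scaleC (of_nat (n choose k) * z2 ^ k) (A ^ k)
        + scaleC \<i> (scaleC (of_nat (n choose k) * z3 ^ k) (A ^ k)) = g k"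
        unfolding z0_def z1_def z2_def z3_def coeff_identity root_filter g_def
        by (simp add: scaleC_real[symmetric] mult.commute mult.left_commute)
    qed
    finally show ?thesis .
  qed
  have one: "1 \<in> {..n}" using n0 by simp
  have split: "(\<Sum>k\<le>n. g k) = g 1 + (\<Sum>k\<in>{..n} - {1}. g k)"
    by (rule sum.remove[OF _ one]) simp
  have g1: "norm (g 1) = 8"
    using a0 n0 by (simp add: g_def w_def \<alpha>_def[symmetric] field_simps)
  have gk: "norm (g k) \<le> (if 5 \<le> k then 4 * (2^k / fact k) else 0)" if "k \<in> {..n} - {1}" for k
  proof (cases "k mod 4 = 1")
    case True
    have "k \<noteq> 1" using that by simp
    with True have k5: "5 \<le> k" by presburger
    have "norm (g k) = 4 * real (n choose k) * w ^ k * norm (A ^ k)"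
      using True w0 by (simp add: g_def)
    also have "\<dots> \<le> 4 * real (n choose k) * w ^ k * \<alpha> ^ k"
      unfolding \<alpha>_def using w0 by (intro mult_left_mono norm_power_ineq) auto
    also have "\<dots> = 4 * (real (n choose k) * (2 / real n) ^ k)"
    proof -
      have wa: "w * \<alpha> = 2 / real n" using a0 by (simp add: w_def)
      show ?thesis by (simp add: power_mult_distrib mult.assoc wa[symmetric])
    qed
    also have "\<dots> \<le> 4 * (2 ^ k / fact k)"
      using choose_bound[of n k] n0 by simp
    finally show ?thesis using k5 by simp
  next
    case False then show ?thesis by (simp add: g_def)
  qed
  have "norm (\<Sum>k\<in>{..n} - {1}. g k) \<le> (\<Sum>k\<in>{..n} - {1}. norm (g k))" by (rule norm_sum)
  also have "\<dots> \<le> (\<Sum>k\<in>{..n} - {1}. (if 5 \<le> k then 4 * (2^k / fact k) else 0))"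
    by (rule sum_mono) (rule gk)
  also have "\<dots> \<le> (\<Sum>k\<in>{..n}. (if 5 \<le> k then 4 * (2^k / fact k) else (0::real)))"
    by (rule sum_mono2) auto
  also have "\<dots> = 4 * (\<Sum>k\<le>n. if 5 \<le> k then 2^k / fact k else 0)"
    by (simp add: sum_distrib_left if_distrib cong: if_cong)
  also have "\<dots> \<le> 4 * (8/15)" using tail_bound[of n] by simp
  finally have rest: "norm (\<Sum>k\<in>{..n} - {1}. g k) \<le> 32/15" by simp
  have "8 - 32/15 \<le> norm S"
  proof -
    have "norm (g 1) \<le> norm (g 1 + (\<Sum>k\<in>{..n} - {1}. g k)) + norm (\<Sum>k\<in>{..n} - {1}. g k)"
      using norm_triangle_ineq4[of "g 1 + (\<Sum>k\<in>{..n} - {1}. g k)" "(\<Sum>k\<in>{..n} - {1}. g k)"] by simp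
    then show ?thesis unfolding Sg split using g1 rest by linarith
  qed
  then show False using Sup by simp
qed

lemma zero_from_sum:
  fixes z :: "'i \<Rightarrow> 'a::cstar_algebra"
  assumes fin: "finite F" and s0: "(\<Sum>k\<in>F. z k * cstar (z k) + cstar (z k) * z k) = 0" and m: "m \<in> F"
  shows "z m = 0"
proof -
  define h where "h k = scaleR (1/2) (z k + cstar (z k))" for k
  define g where "g k = scaleC (- \<i> / 2) (z k - cstar (z k))" for k
  have sah: "cstar (h k) = h k" for k
    by (simp add: h_def cstar_scaleR cstar_add cstar_cstar add.commute)
  have sag: "cstar (g k) = g k" for k
  proof -
    have "cstar (g k) = scaleC (\<i> / 2) (cstar (z k) - z k)"
      by (simp add: g_def cstar_scaleC cstar_diff cstar_cstar)
    also have "\<dots> = scaleC (- \<i> / 2) (z k - cstar (z k))"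
      by (metis minus_diff_eq scaleC_minus_left scaleC_minus_right minus_divide_left minus_minus)
    finally show ?thesis by (simp add: g_def)
  qed
  have hg: "h k * h k + g k * g k = scaleR (1/4) ((z k * cstar (z k) + cstar (z k) * z k) + (z k * cstar (z k) + cstar (z k) * z k))" for k
  proof -
    have gg: "g k * g k = - scaleR (1/4) ((z k - cstar (z k)) * (z k - cstar (z k)))"
    proof -
      have "g k * g k = scaleC ((- \<i> / 2) * (- \<i> / 2)) ((z k - cstar (z k)) * (z k - cstar (z k)))"
        unfolding g_def by (rule scaleC_mult_scaleC)
      also have "(- \<i> / 2) * (- \<i> / 2) = - complex_of_real (1/4)" by simp
      moreover have "scaleC (1/4) v = scaleR (1/4) v" for v :: 'a
        using scaleC_real[of "1/4" v] by simp
      ultimately show ?thesis by (simp add: scaleC_minus_left)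
    qed
    show ?thesis unfolding gg h_def by (simp add: algebra_simps)
  qed
  have sum0: "(\<Sum>k\<in>F. h k * h k + g k * g k) = 0"
    unfolding hg using s0 by (simp add: sum.distrib flip: scaleR_right.sum)
  have zhg: "z k = h k + scaleC \<i> (g k)" for k
  proof -
    have "scaleC \<i> (g k) = scaleR (1/2) (z k - cstar (z k))"
    proof -
      have "scaleC \<i> (g k) = scaleC (1/2) (z k - cstar (z k))"
        unfolding g_def scaleC_scaleC by simp
      moreover have "scaleC (1/2) v = scaleR (1/2) v" for v :: 'a
        using scaleC_real[of "1/2" v] by simp
      ultimately show ?thesis by simp
    qed
    then have "h k + scaleC \<i> (g k) = scaleR (1/2) (z k + cstar (z k)) + scaleR (1/2) (z k - cstar (z k))"
      by (simp only: h_def)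
    also have "\<dots> = scaleR (1/2) ((z k + cstar (z k)) + (z k - cstar (z k)))"
      by (rule scaleR_add_right[symmetric])
    also have "(z k + cstar (z k)) + (z k - cstar (z k)) = z k + z k" by simp
    finally show ?thesis by simp
  qed
  define T where "T = (\<Sum>k\<in>F - {m}. h k * h k + g k * g k)"
  have pT: "psd T" unfolding T_def
    by (rule psd_sum) (use fin sah sag in \<open>auto intro: psd_add psd_square\<close>)
  have decomp: "h m * h m + g m * g m + T = 0"
    using sum0 sum.remove[OF fin m, of "\<lambda>k. h k * h k + g k * g k"] unfolding T_def by simp
  have hm: "h m * h m = - (g m * g m + T)" by (subst eq_neg_iff_add_eq_0, metis decomp add.assoc add.left_commute)
  have gm: "g m * g m = - (h m * h m + T)" by (subst eq_neg_iff_add_eq_0, metis decomp add.assoc add.left_commute)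
  have "h m * h m = 0"
  proof (rule psd_antisym)
    show "cstar (h m * h m) = h m * h m" by (simp add: cstar_mult sah)
    show "psd (h m * h m)" by (rule psd_square[OF sah])
    show "psd (- (h m * h m))" unfolding hm by (simp add: psd_add psd_square sag pT)
  qed
  then have h0: "h m = 0" using cstar_identity[of "h m"] sah by simp
  have "g m * g m = 0"
  proof (rule psd_antisym)
    show "cstar (g m * g m) = g m * g m" by (simp add: cstar_mult sag)
    show "psd (g m * g m)" by (rule psd_square[OF sag])
    show "psd (- (g m * g m))" unfolding gm by (simp add: psd_add psd_square sah pT)
  qed
  then have g0: "g m = 0" using cstar_identity[of "g m"] sag by simp
  show ?thesis using zhg[of m] h0 g0 by simp
qed

lemma sum3_rev:
  "(\<Sum>i<N. \<Sum>j<N. \<Sum>k<N. f i j k) = (\<Sum>k<(N::nat). \<Sum>j<N. \<Sum>i<N. (f i j k :: 'a::comm_monoid_add))"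
proof -
  have "(\<Sum>i<N. \<Sum>j<N. \<Sum>k<N. f i j k) = (\<Sum>i<N. \<Sum>k<N. \<Sum>j<N. f i j k)"
    by (rule sum.cong[OF refl], rule sum.swap)
  also have "\<dots> = (\<Sum>k<N. \<Sum>i<N. \<Sum>j<N. f i j k)" by (rule sum.swap)
  also have "\<dots> = (\<Sum>k<N. \<Sum>j<N. \<Sum>i<N. f i j k)"
    by (rule sum.cong[OF refl], rule sum.swap)
  finally show ?thesis .
qed

locale biunit =
  fixes x y :: "nat \<Rightarrow> 'a::ring_1" and N :: nat
  assumes H1: "(\<Sum>k<N. x k * y k) = 1" and H2: "(\<Sum>k<N. y k * x k) = 1"
begin

lemma sumX: "(\<Sum>k<N. x k * (y k * R)) = R"
proof -
  have "(\<Sum>k<N. x k * (y k * R)) = (\<Sum>k<N. x k * y k) * R" by (simp add: sum_distrib_right mult.assoc)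
  then show ?thesis by (simp add: H1)
qed

lemma sumY: "(\<Sum>k<N. y k * (x k * R)) = R"
proof -
  have "(\<Sum>k<N. y k * (x k * R)) = (\<Sum>k<N. y k * x k) * R" by (simp add: sum_distrib_right mult.assoc)
  then show ?thesis by (simp add: H2)
qed

lemmas S = sumX sumY H1 H2

lemma T1: "(\<Sum>i<N. \<Sum>j<N. \<Sum>k<N. x i*(x j*(y k*(x k*(y j*y i))))) = 1"
  by (simp add: S flip: sum_distrib_left)

lemma S4: "(\<Sum>i<N. \<Sum>j<N. \<Sum>k<N. y i*(y j*(x k*(y k*(x j*x i))))) = 1"
  by (simp add: S flip: sum_distrib_left)

lemma T4: "(\<Sum>i<N. \<Sum>j<N. \<Sum>k<N. y k*(x j*(x i*(y i*(y j*x k))))) = 1"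
  by (subst sum3_rev) (simp add: S flip: sum_distrib_left)

lemma S1: "(\<Sum>i<N. \<Sum>j<N. \<Sum>k<N. x k*(y j*(y i*(x i*(x j*y k))))) = 1"
  by (subst sum3_rev) (simp add: S flip: sum_distrib_left)


lemma triple_13:
  assumes R1: "\<And>i j k. i < N \<Longrightarrow> j < N \<Longrightarrow> k < N \<Longrightarrow> x i * x j * x k = x k * x j * x i"
    and R1y: "\<And>i j k. i < N \<Longrightarrow> j < N \<Longrightarrow> k < N \<Longrightarrow> y i * y j * y k = y k * y j * y i"
  shows "(\<Sum>i<N. \<Sum>j<N. \<Sum>k<N. (x i*x j*y k - y k*x j*x i)*(x k*y j*y i - y i*y j*x k)
            + (x k*y j*y i - y i*y j*x k)*(x i*x j*y k - y k*x j*x i)) = 0"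
proof -
  have r1q: "x i*(x j*(x k*q)) = x k*(x j*(x i*q))" if "i < N" "j < N" "k < N" for i j k q
    using arg_cong[OF R1[OF that], of "\<lambda>u. u * q"] by (simp add: mult.assoc)
  have ryq: "y i*(y j*(y k*q)) = y k*(y j*(y i*q))" if "i < N" "j < N" "k < N" for i j k q
    using arg_cong[OF R1y[OF that], of "\<lambda>u. u * q"] by (simp add: mult.assoc)
  have T2: "(\<Sum>i<N. \<Sum>j<N. \<Sum>k<N. x i*(x j*(y k*(y i*(y j*x k))))) = 1"
  proof -
    have "(\<Sum>i<N. \<Sum>j<N. \<Sum>k<N. x i*(x j*(y k*(y i*(y j*x k)))))
        = (\<Sum>i<N. \<Sum>j<N. \<Sum>k<N. x i*(x j*(y j*(y i*(y k*x k)))))"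
      by (intro sum.cong refl) (simp add: ryq)
    also have "\<dots> = 1" by (simp add: S flip: sum_distrib_left)
    finally show ?thesis .
  qed
  have T3: "(\<Sum>i<N. \<Sum>j<N. \<Sum>k<N. y k*(x j*(x i*(x k*(y j*y i))))) = 1"
  proof -
    have "(\<Sum>i<N. \<Sum>j<N. \<Sum>k<N. y k*(x j*(x i*(x k*(y j*y i)))))
        = (\<Sum>i<N. \<Sum>j<N. \<Sum>k<N. y k*(x k*(x i*(x j*(y j*y i)))))"
      by (intro sum.cong refl) (simp add: r1q)
    also have "\<dots> = 1" by (simp add: S flip: sum_distrib_left)
    finally show ?thesis .
  qed
  have S2: "(\<Sum>i<N. \<Sum>j<N. \<Sum>k<N. x k*(y j*(y i*(y k*(x j*x i))))) = 1"
  proof -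
    have "(\<Sum>i<N. \<Sum>j<N. \<Sum>k<N. x k*(y j*(y i*(y k*(x j*x i)))))
        = (\<Sum>i<N. \<Sum>j<N. \<Sum>k<N. x k*(y k*(y i*(y j*(x j*x i)))))"
      by (intro sum.cong refl) (simp add: ryq)
    also have "\<dots> = 1" by (simp add: S flip: sum_distrib_left)
    finally show ?thesis .
  qed
  have S3: "(\<Sum>i<N. \<Sum>j<N. \<Sum>k<N. y i*(y j*(x k*(x i*(x j*y k))))) = 1"
  proof -
    have "(\<Sum>i<N. \<Sum>j<N. \<Sum>k<N. y i*(y j*(x k*(x i*(x j*y k)))))
        = (\<Sum>i<N. \<Sum>j<N. \<Sum>k<N. y i*(y j*(x j*(x i*(x k*y k)))))"
      by (intro sum.cong refl) (simp add: r1q)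
    also have "\<dots> = 1" by (simp add: S flip: sum_distrib_left)
    finally show ?thesis .
  qed
  have pt: "(x i*x j*y k - y k*x j*x i)*(x k*y j*y i - y i*y j*x k)
            + (x k*y j*y i - y i*y j*x k)*(x i*x j*y k - y k*x j*x i)
     = (x i*(x j*(y k*(x k*(y j*y i)))) + y k*(x j*(x i*(y i*(y j*x k))))
        + x k*(y j*(y i*(x i*(x j*y k)))) + y i*(y j*(x k*(y k*(x j*x i)))))
     - (x i*(x j*(y k*(y i*(y j*x k)))) + y k*(x j*(x i*(x k*(y j*y i))))
        + x k*(y j*(y i*(y k*(x j*x i)))) + y i*(y j*(x k*(x i*(x j*y k)))))" for i j k
    by (simp add: algebra_simps)
  show ?thesis
    unfolding pt by (simp add: sum.distrib sum_subtractf T1 T2 T3 T4 S1 S2 S3 S4)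
qed

lemma triple_31:
  assumes R3: "\<And>i j k. i < N \<Longrightarrow> j < N \<Longrightarrow> k < N \<Longrightarrow> x i * x j * y k = y k * x j * x i"
    and R3y: "\<And>i j k. i < N \<Longrightarrow> j < N \<Longrightarrow> k < N \<Longrightarrow> x k * y j * y i = y i * y j * x k"
  shows "(\<Sum>i<N. \<Sum>j<N. \<Sum>k<N. (x i*x j*x k - x k*x j*x i)*(y k*y j*y i - y i*y j*y k)
            + (y k*y j*y i - y i*y j*y k)*(x i*x j*x k - x k*x j*x i)) = 0"
proof -
  have r3q: "x a*(x b*(y c*q)) = y c*(x b*(x a*q))" if "a < N" "b < N" "c < N" for a b c q
    using arg_cong[OF R3[OF that], of "\<lambda>u. u * q"] by (simp add: mult.assoc)
  have r3q': "y c*(x b*(x a*q)) = x a*(x b*(y c*q))" if "a < N" "b < N" "c < N" for a b c q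
    using r3q[OF that] by simp
  have r3yq: "x c*(y b*(y a*q)) = y a*(y b*(x c*q))" if "a < N" "b < N" "c < N" for a b c q
    using arg_cong[OF R3y[OF that], of "\<lambda>u. u * q"] by (simp add: mult.assoc)
  have f1: "(\<Sum>i<N. \<Sum>j<N. \<Sum>k<N. x i*(x j*(x k*(y k*(y j*y i))))) = 1"
    by (simp add: S flip: sum_distrib_left)
  have f2: "(\<Sum>i<N. \<Sum>j<N. \<Sum>k<N. x i*(x j*(x k*(y i*(y j*y k))))) = 1"
  proof -
    have "(\<Sum>i<N. \<Sum>j<N. \<Sum>k<N. x i*(x j*(x k*(y i*(y j*y k)))))
        = (\<Sum>i<N. \<Sum>j<N. \<Sum>k<N. x i*(x j*(y j*(y i*(x k*y k)))))"
      by (intro sum.cong refl) (simp add: r3yq)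
    also have "\<dots> = 1" by (simp add: S flip: sum_distrib_left)
    finally show ?thesis .
  qed
  have f3: "(\<Sum>i<N. \<Sum>j<N. \<Sum>k<N. x k*(x j*(x i*(y k*(y j*y i))))) = 1"
  proof -
    have "(\<Sum>i<N. \<Sum>j<N. \<Sum>k<N. x k*(x j*(x i*(y k*(y j*y i)))))
        = (\<Sum>i<N. \<Sum>j<N. \<Sum>k<N. x k*(y k*(x i*(x j*(y j*y i)))))"
      by (intro sum.cong refl) (simp add: r3q)
    also have "\<dots> = 1" by (simp add: S flip: sum_distrib_left)
    finally show ?thesis .
  qed
  have f4: "(\<Sum>i<N. \<Sum>j<N. \<Sum>k<N. x k*(x j*(x i*(y i*(y j*y k))))) = 1"
    by (subst sum3_rev) (simp add: S flip: sum_distrib_left)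
  have g1: "(\<Sum>i<N. \<Sum>j<N. \<Sum>k<N. y k*(y j*(y i*(x i*(x j*x k))))) = 1"
    by (subst sum3_rev) (simp add: S flip: sum_distrib_left)
  have g2: "(\<Sum>i<N. \<Sum>j<N. \<Sum>k<N. y k*(y j*(y i*(x k*(x j*x i))))) = 1"
  proof -
    have "(\<Sum>i<N. \<Sum>j<N. \<Sum>k<N. y k*(y j*(y i*(x k*(x j*x i)))))
        = (\<Sum>i<N. \<Sum>j<N. \<Sum>k<N. y k*(y j*(x j*(x k*(y i*x i)))))"
      by (intro sum.cong refl) (simp add: r3q')
    also have "\<dots> = 1" by (subst sum3_rev) (simp add: S flip: sum_distrib_left)
    finally show ?thesis .
  qed
  have g3: "(\<Sum>i<N. \<Sum>j<N. \<Sum>k<N. y i*(y j*(y k*(x i*(x j*x k))))) = 1"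
  proof -
    have "(\<Sum>i<N. \<Sum>j<N. \<Sum>k<N. y i*(y j*(y k*(x i*(x j*x k)))))
        = (\<Sum>i<N. \<Sum>j<N. \<Sum>k<N. y i*(y j*(x j*(x i*(y k*x k)))))"
      by (intro sum.cong refl) (simp add: r3q')
    also have "\<dots> = 1" by (simp add: S flip: sum_distrib_left)
    finally show ?thesis .
  qed
  have g4: "(\<Sum>i<N. \<Sum>j<N. \<Sum>k<N. y i*(y j*(y k*(x k*(x j*x i))))) = 1"
    by (simp add: S flip: sum_distrib_left)
  have pt: "(x i*x j*x k - x k*x j*x i)*(y k*y j*y i - y i*y j*y k)
            + (y k*y j*y i - y i*y j*y k)*(x i*x j*x k - x k*x j*x i)
     = (x i*(x j*(x k*(y k*(y j*y i)))) + x k*(x j*(x i*(y i*(y j*y k))))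
        + y k*(y j*(y i*(x i*(x j*x k)))) + y i*(y j*(y k*(x k*(x j*x i)))))
     - (x i*(x j*(x k*(y i*(y j*y k)))) + x k*(x j*(x i*(y k*(y j*y i))))
        + y k*(y j*(y i*(x k*(x j*x i)))) + y i*(y j*(y k*(x i*(x j*x k)))))" for i j k
    by (simp add: algebra_simps)
  show ?thesis
    unfolding pt by (simp add: sum.distrib sum_subtractf f1 f2 f3 f4 g1 g2 g3 g4)
qed

lemma derive_2:
  assumes R1: "\<And>i j k. i < N \<Longrightarrow> j < N \<Longrightarrow> k < N \<Longrightarrow> x i * x j * x k = x k * x j * x i"
    and R3: "\<And>i j k. i < N \<Longrightarrow> j < N \<Longrightarrow> k < N \<Longrightarrow> x i * x j * y k = y k * x j * x i"
    and ijk: "i < N" "j < N" "k < N"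
  shows "x i * y j * x k = x k * y j * x i"
proof -
  have r1q: "x a*(x b*(x c*q)) = x c*(x b*(x a*q))" if "a < N" "b < N" "c < N" for a b c q
    using arg_cong[OF R1[OF that], of "\<lambda>u. u * q"] by (simp add: mult.assoc)
  have r3q: "x a*(x b*(y c*q)) = y c*(x b*(x a*q))" if "a < N" "b < N" "c < N" for a b c q
    using arg_cong[OF R3[OF that], of "\<lambda>u. u * q"] by (simp add: mult.assoc)
  have "x i * y j * x k = (\<Sum>l<N. x i*(y j*(x k*(x l*y l))))"
    by (simp add: mult.assoc H1 flip: sum_distrib_left)
  also have "\<dots> = (\<Sum>l<N. x k*(y j*(x i*(x l*y l))))"
  proof (rule sum.cong[OF refl])
    fix l assume "l \<in> {..<N}"
    then have l: "l < N" by simp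
    have "x i*(y j*(x k*(x l*y l))) = x i*(x l*(x k*(y j*y l)))"
      using r3q[OF l ijk(3) ijk(2), of "y l"] by simp
    also have "\<dots> = x k*(x l*(x i*(y j*y l)))" using r1q[OF ijk(1) l ijk(3)] by simp
    also have "\<dots> = x k*(y j*(x i*(x l*y l)))"
      using r3q[OF l ijk(1) ijk(2), of "y l"] by simp
    finally show "x i*(y j*(x k*(x l*y l))) = x k*(y j*(x i*(x l*y l)))" .
  qed
  also have "\<dots> = x k * y j * x i"
    by (simp add: mult.assoc H1 flip: sum_distrib_left)
  finally show ?thesis .
qed

end

lemma prod3_sum:
  "(\<Sum>p\<in>{..<N}\<times>{..<N}\<times>{..<N}. G p) = (\<Sum>i<N. \<Sum>j<(N::nat). \<Sum>k<N. (G (i,j,k) :: 'a::comm_monoid_add))"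
  by (simp add: sum.cartesian_product)

theorem proposition3p1:
  fixes x :: "nat \<Rightarrow> 'a::cstar_algebra" and N :: nat
  assumes "(\<Sum>i<N. x i * cstar (x i)) = 1"
    and "(\<Sum>i<N. cstar (x i) * x i) = 1"
  shows "((\<forall>a\<in>x ` {..<N}. \<forall>b\<in>x ` {..<N}. \<forall>c\<in>x ` {..<N}. a * b * c = c * b * a)
           \<longleftrightarrow> (\<forall>a\<in>x ` {..<N}. \<forall>b\<in>x ` {..<N}. \<forall>c\<in>x ` {..<N}.
                  a * b * cstar c = cstar c * b * a))
       \<and> ((\<forall>a\<in>x ` {..<N}. \<forall>b\<in>x ` {..<N}. \<forall>c\<in>x ` {..<N}. a * b * c = c * b * a)
           \<longrightarrow> (\<forall>a\<in>x ` {..<N}. \<forall>b\<in>x ` {..<N}. \<forall>c\<in>x ` {..<N}.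
                  a * cstar b * c = c * cstar b * a))"
proof -
  define y where "y k = cstar (x k)" for k
  interpret biunit x y N
    by unfold_locales (use assms in \<open>simp_all add: y_def\<close>)
  have cx: "cstar (x k) = y k" for k by (simp add: y_def)
  have cy: "cstar (y k) = x k" for k by (simp add: y_def cstar_cstar)
  have img: "(\<forall>a\<in>x ` {..<N}. \<forall>b\<in>x ` {..<N}. \<forall>c\<in>x ` {..<N}. P a b c) \<longleftrightarrow> (\<forall>i<N. \<forall>j<N. \<forall>k<N. P (x i) (x j) (x k))" for P
    by auto
  define F where "F = {..<N}\<times>{..<N}\<times>{..<N}"
  have finF: "finite F" by (simp add: F_def)
  have C13: "x i * x j * y k = y k * x j * x i"
    if R1: "\<And>i j k. i < N \<Longrightarrow> j < N \<Longrightarrow> k < N \<Longrightarrow> x i * x j * x k = x k * x j * x i"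
    and ijk: "i < N" "j < N" "k < N" for i j k
  proof -
    have R1y: "y i * y j * y k = y k * y j * y i" if "i < N" "j < N" "k < N" for i j k
    proof -
      have "cstar (x k * x j * x i) = cstar (x i * x j * x k)" using R1[OF that] by simp
      then show ?thesis by (simp add: cstar_mult cx mult.assoc)
    qed
    define z where "z p = (case p of (i,j,k) \<Rightarrow> x i*x j*y k - y k*x j*x i)" for p
    have zz: "z (i,j,k) = x i*x j*y k - y k*x j*x i" for i j k by (simp add: z_def)
    have cz: "cstar (z (i,j,k)) = x k*y j*y i - y i*y j*x k" for i j k
      by (simp add: zz cstar_diff cstar_mult cx cy mult.assoc)
    have "(\<Sum>p\<in>F. z p * cstar (z p) + cstar (z p) * z p) = 0"
      by (unfold F_def prod3_sum, unfold cz, unfold zz, rule triple_13[OF R1 R1y])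
    then have "z (i,j,k) = 0" by (rule zero_from_sum[OF finF]) (use ijk in \<open>simp add: F_def\<close>)
    then show ?thesis by (simp add: zz)
  qed
  have C31: "x i * x j * x k = x k * x j * x i"
    if R3: "\<And>i j k. i < N \<Longrightarrow> j < N \<Longrightarrow> k < N \<Longrightarrow> x i * x j * y k = y k * x j * x i"
    and ijk: "i < N" "j < N" "k < N" for i j k
  proof -
    have R3y: "x k * y j * y i = y i * y j * x k" if "i < N" "j < N" "k < N" for i j k
    proof -
      have "cstar (x i * x j * y k) = cstar (y k * x j * x i)" using R3[OF that] by simp
      then show ?thesis by (simp add: cstar_mult cx cy mult.assoc)
    qed
    define z where "z p = (case p of (i,j,k) \<Rightarrow> x i*x j*x k - x k*x j*x i)" for p
    have zz: "z (i,j,k) = x i*x j*x k - x k*x j*x i" for i j k by (simp add: z_def)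
    have cz: "cstar (z (i,j,k)) = y k*y j*y i - y i*y j*y k" for i j k
      by (simp add: zz cstar_diff cstar_mult cx mult.assoc)
    have "(\<Sum>p\<in>F. z p * cstar (z p) + cstar (z p) * z p) = 0"
      by (unfold F_def prod3_sum, unfold cz, unfold zz, rule triple_31[OF R3 R3y])
    then have "z (i,j,k) = 0" by (rule zero_from_sum[OF finF]) (use ijk in \<open>simp add: F_def\<close>)
    then show ?thesis by (simp add: zz)
  qed
  have C12: "x i * y j * x k = x k * y j * x i"
    if R1: "\<And>i j k. i < N \<Longrightarrow> j < N \<Longrightarrow> k < N \<Longrightarrow> x i * x j * x k = x k * x j * x i"
    and ijk: "i < N" "j < N" "k < N" for i j k
    by (rule derive_2[OF R1 C13[OF R1] ijk]) 
  show ?thesis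
    unfolding img y_def[symmetric] cx
    using C13 C31 C12 by blast
qed

end
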